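(* Let $\Omega\subset\mathbb R^n$ be a properly convex quasi-homogeneous affine domain, and let $L$ be the linear subspace spanned by the asymptotic cone $\mathrm{AC}(\Omega)$. Then $\Omega$ admits a parallel foliation by cosets of its asymptotic cone: for every $x\in\Omega$, the section $\Omega_x=\Omega\cap(x+L)$ is a translate of the asymptotic cone of $\Omega$ (more precisely, $\overline{\Omega_x}=p+\mathrm{AC}(\Omega)$ for some point $p$).
   Context: An affine domain is a connected open subset $\Omega\subset\mathbb R^n$; it is quasi-homogeneous if there are a compact $K\subset\Omega$ and a subgroup $G$ of the group of affine transformations preserving $\Omega$ with $GK=\Omega$. A convex affine domain is properly convex if it contains no complete affine line. The asymptotic cone is $\mathrm{AC}(\Omega)=\{u\in\mathbb R^n\mid x+tu\in\Omega\ \text{for all}\ x\in\Omega,\ t\ge0\}$. *)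

theory Defs
  imports "HOL-Analysis.Analysis"
begin

definition affine_transformation :: "('a::euclidean_space \<Rightarrow> 'a) \<Rightarrow> bool" where
  "affine_transformation f \<longleftrightarrow> (\<exists>A b. linear A \<and> bij A \<and> (\<forall>x. f x = A x + b))"

definition affine_domain :: "'a::euclidean_space set \<Rightarrow> bool" where
  "affine_domain \<Omega> \<longleftrightarrow> open \<Omega> \<and> connected \<Omega> \<and> \<Omega> \<noteq> {}"

definition affine_group_preserving :: "('a::euclidean_space \<Rightarrow> 'a) set \<Rightarrow> 'a set \<Rightarrow> bool" where
  "affine_group_preserving G \<Omega> \<longleftrightarrow>
     id \<in> G \<and> (\<forall>f\<in>G. \<forall>g\<in>G. f \<circ> g \<in> G) \<and> (\<forall>g\<in>G. inv g \<in> G) \<and>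
     (\<forall>g\<in>G. affine_transformation g \<and> g ` \<Omega> = \<Omega>)"

definition quasi_homogeneous :: "'a::euclidean_space set \<Rightarrow> bool" where
  "quasi_homogeneous \<Omega> \<longleftrightarrow> affine_domain \<Omega> \<and>
     (\<exists>K G. compact K \<and> K \<subseteq> \<Omega> \<and> affine_group_preserving G \<Omega> \<and> (\<Union>g\<in>G. g ` K) = \<Omega>)"

definition properly_convex :: "'a::euclidean_space set \<Rightarrow> bool" where
  "properly_convex \<Omega> \<longleftrightarrow> convex \<Omega> \<and> \<not> (\<exists>x v. v \<noteq> 0 \<and> (\<forall>t::real. x + t *\<^sub>R v \<in> \<Omega>))"

definition asymptotic_cone :: "'a::euclidean_space set \<Rightarrow> 'a set" where
  "asymptotic_cone \<Omega> = {u. \<forall>x\<in>\<Omega>. \<forall>t::real. t \<ge> 0 \<longrightarrow> x + t *\<^sub>R u \<in> \<Omega>}"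

end

theory Submission
  imports Defs
begin

lemma acD: "u \<in> asymptotic_cone \<Omega> \<Longrightarrow> x \<in> \<Omega> \<Longrightarrow> 0 \<le> t \<Longrightarrow> x + t *\<^sub>R u \<in> \<Omega>"
  by (simp add: asymptotic_cone_def)

lemma acI: "(\<And>x t. x \<in> \<Omega> \<Longrightarrow> 0 \<le> t \<Longrightarrow> x + t *\<^sub>R u \<in> \<Omega>) \<Longrightarrow> u \<in> asymptotic_cone \<Omega>"
  by (simp add: asymptotic_cone_def)

lemma ac_add: "z \<in> \<Omega> \<Longrightarrow> u \<in> asymptotic_cone \<Omega> \<Longrightarrow> z + u \<in> \<Omega>"
  using acD[of u \<Omega> z 1] by simp

lemma ac_zero: "0 \<in> asymptotic_cone \<Omega>"
  by (rule acI) simp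

lemma ac_scale: "u \<in> asymptotic_cone \<Omega> \<Longrightarrow> 0 \<le> t \<Longrightarrow> t *\<^sub>R u \<in> asymptotic_cone \<Omega>"
  by (rule acI) (use acD[of u \<Omega> _ "_ * t"] in simp)

lemma ac_plus: "u \<in> asymptotic_cone \<Omega> \<Longrightarrow> w \<in> asymptotic_cone \<Omega> \<Longrightarrow> u + w \<in> asymptotic_cone \<Omega>"
proof (rule acI)
  fix x t assume u: "u \<in> asymptotic_cone \<Omega>" and w: "w \<in> asymptotic_cone \<Omega>" and "x \<in> \<Omega>" "(0::real) \<le> t"
  then have "(x + t *\<^sub>R u) + t *\<^sub>R w \<in> \<Omega>" by (intro acD) (auto intro: acD)
  then show "x + t *\<^sub>R (u + w) \<in> \<Omega>" by (simp add: algebra_simps)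
qed

lemma seg_int_cl:
  fixes S :: "'a::euclidean_space set"
  assumes "open S" "convex S" "y \<in> S" "p \<in> closure S" "0 \<le> s" "s < 1"
  shows "(1 - s) *\<^sub>R y + s *\<^sub>R p \<in> S"
proof (cases "y = p \<or> s = 0")
  case True then show ?thesis using assms by (auto simp: algebra_simps)
next
  case False
  then have "(1 - s) *\<^sub>R y + s *\<^sub>R p \<in> open_segment y p"
    using assms by (auto simp: in_segment intro!: exI[of _ s])
  moreover have "open_segment y p \<subseteq> interior S"
    using in_interior_closure_convex_segment[of S y p] assms by (simp add: interior_open)
  ultimately show ?thesis using assms by (simp add: interior_open subset_iff)
qed

lemma ac_rec:
  fixes \<Omega> :: "'a::euclidean_space set"
  assumes opn: "open \<Omega>" and cvx: "convex \<Omega>"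
  assumes z: "z \<in> closure \<Omega>" and d: "\<And>t. 0 \<le> t \<Longrightarrow> z + t *\<^sub>R d \<in> closure \<Omega>"
  shows "d \<in> asymptotic_cone \<Omega>"
proof (rule acI)
  fix y t assume y: "y \<in> \<Omega>" and t: "(0::real) \<le> t"
  obtain e where e: "e > 0" "ball y e \<subseteq> \<Omega>" using opn y open_contains_ball by blast
  define n where "n = norm (y - z)"
  have n0: "n \<ge> 0" by (simp add: n_def)
  define s where "s = e / (2 * (n + e))"
  have s0: "0 < s" using e n0 by (simp add: s_def)
  have s2: "s \<le> 1/2" using e n0 by (simp add: s_def field_simps)
  have sn: "2 * s * n < e"
  proof -
    have "2 * s * n = e * (n / (n + e))" using e n0 by (simp add: s_def field_simps)
    also have "\<dots> < e * 1" using e n0 by (intro mult_strict_left_mono) auto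
    finally show ?thesis by simp
  qed
  define y2 where "y2 = (1/(1-s)) *\<^sub>R (y - s *\<^sub>R z)"
  have eq1: "(1-s) *\<^sub>R y2 = y - s *\<^sub>R z" using s2 by (simp add: y2_def)
  have "(1-s) *\<^sub>R (y2 - y) = s *\<^sub>R (y - z)"
    using eq1 by (simp add: algebra_simps)
  then have "norm ((1-s) *\<^sub>R (y2 - y)) = norm (s *\<^sub>R (y - z))" by simp
  then have "(1-s) * norm (y2 - y) = s * n" using s0 s2 by (simp add: n_def)
  moreover have "(1/2) * norm (y2 - y) \<le> (1-s) * norm (y2 - y)"
    using s2 by (intro mult_right_mono) auto
  ultimately have "norm (y2 - y) \<le> 2 * s * n" by linarith
  then have "dist y y2 < e" using sn by (simp add: dist_norm norm_minus_commute)
  then have "y2 \<in> \<Omega>" using e by auto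
  moreover have "z + (t/s) *\<^sub>R d \<in> closure \<Omega>" using d t s0 by simp
  ultimately have "(1 - s) *\<^sub>R y2 + s *\<^sub>R (z + (t/s) *\<^sub>R d) \<in> \<Omega>"
    using seg_int_cl[OF opn cvx] s0 s2 by simp
  moreover have "(1 - s) *\<^sub>R y2 + s *\<^sub>R (z + (t/s) *\<^sub>R d) = y + t *\<^sub>R d"
    using s0 eq1 by (simp add: algebra_simps)
  ultimately show "y + t *\<^sub>R d \<in> \<Omega>" by simp
qed

lemma ac_closed:
  fixes \<Omega> :: "'a::euclidean_space set"
  assumes opn: "open \<Omega>" and cvx: "convex \<Omega>" and ne: "\<Omega> \<noteq> {}"
  shows "closed (asymptotic_cone \<Omega>)"
proof -
  obtain z where z: "z \<in> \<Omega>" using ne by blast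
  have "closure (asymptotic_cone \<Omega>) \<subseteq> asymptotic_cone \<Omega>"
  proof
    fix u assume u: "u \<in> closure (asymptotic_cone \<Omega>)"
    have "z + t *\<^sub>R u \<in> closure \<Omega>" if t: "0 \<le> t" for t
    proof -
      have "(\<lambda>w. z + t *\<^sub>R w) ` closure (asymptotic_cone \<Omega>) \<subseteq> closure \<Omega>"
      proof (rule image_closure_subset)
        show "continuous_on (closure (asymptotic_cone \<Omega>)) (\<lambda>w. z + t *\<^sub>R w)"
          by (intro continuous_intros)
        show "(\<lambda>w. z + t *\<^sub>R w) ` asymptotic_cone \<Omega> \<subseteq> closure \<Omega>"
          using acD[of _ \<Omega> z t] z t closure_subset by blast
      qed simp
      then show ?thesis using u by blast
    qed
    then show "u \<in> asymptotic_cone \<Omega>"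
      using ac_rec[OF opn cvx, of z u] z closure_subset by blast
  qed
  then show ?thesis using closure_subset_eq by blast
qed

lemma ac_pointed:
  fixes \<Omega> :: "'a::euclidean_space set"
  assumes ne: "\<Omega> \<noteq> {}" and noline: "\<not> (\<exists>x v. v \<noteq> 0 \<and> (\<forall>t::real. x + t *\<^sub>R v \<in> \<Omega>))"
    and u: "u \<in> asymptotic_cone \<Omega>" and mu: "- u \<in> asymptotic_cone \<Omega>"
  shows "u = 0"
proof (rule ccontr)
  assume "u \<noteq> 0"
  obtain z where z: "z \<in> \<Omega>" using ne by blast
  have "z + t *\<^sub>R u \<in> \<Omega>" for t
  proof (cases "0 \<le> t")
    case True then show ?thesis using acD[OF u z] by simp
  next
    case False then show ?thesis using acD[OF mu z, of "-t"] by simp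
  qed
  then show False using noline \<open>u \<noteq> 0\<close> by blast
qed

lemma ac_convex:
  "convex (asymptotic_cone \<Omega>)"
  unfolding convex_def using ac_plus ac_scale by (metis)

lemma ac_sum:
  assumes "finite S" "S \<subseteq> asymptotic_cone \<Omega>" "\<forall>x\<in>S. 0 \<le> u x"
  shows "(\<Sum>v\<in>S. u v *\<^sub>R v) \<in> asymptotic_cone \<Omega>"
  using assms
proof (induction S rule: finite_induct)
  case empty then show ?case by (simp add: ac_zero)
next
  case (insert x F)
  then show ?case by (simp add: ac_plus ac_scale)
qed

lemma ac_functional:
  fixes \<Omega> :: "'a::euclidean_space set"
  assumes opn: "open \<Omega>" and cvx: "convex \<Omega>" and ne: "\<Omega> \<noteq> {}"
    and noline: "\<not> (\<exists>x v. v \<noteq> 0 \<and> (\<forall>t::real. x + t *\<^sub>R v \<in> \<Omega>))"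
  shows "\<exists>a \<mu>. \<mu> > 0 \<and> (\<forall>w\<in>asymptotic_cone \<Omega>. a \<bullet> w \<ge> \<mu> * norm w)"
proof -
  let ?C = "asymptotic_cone \<Omega>"
  let ?S = "convex hull (?C \<inter> sphere 0 1)"
  have cC: "closed ?C" using ac_closed[OF opn cvx ne] .
  have cS: "compact ?S"
    by (intro compact_convex_hull closed_Int_compact cC compact_sphere)
  have 0: "0 \<notin> ?S"
  proof
    assume "0 \<in> ?S"
    then obtain S u where S: "finite S" "S \<subseteq> ?C \<inter> sphere 0 1" "\<forall>x\<in>S. 0 \<le> u x"
      "sum u S = 1" "(\<Sum>v\<in>S. u v *\<^sub>R v) = 0"
      unfolding convex_hull_explicit by blast
    obtain v0 where v0: "v0 \<in> S" "u v0 > 0"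
    proof (rule ccontr)
      assume "\<not> thesis"
      then have "\<forall>v\<in>S. u v = 0" using S(3) that by force
      then show False using S(4) by simp
    qed
    have "(\<Sum>v\<in>S. u v *\<^sub>R v) = u v0 *\<^sub>R v0 + (\<Sum>v\<in>S - {v0}. u v *\<^sub>R v)"
      using S(1) v0(1) by (simp add: sum.remove)
    then have "u v0 *\<^sub>R v0 + (\<Sum>v\<in>S - {v0}. u v *\<^sub>R v) = 0" using S(5) by simp
    then have eq: "- (u v0 *\<^sub>R v0) = (\<Sum>v\<in>S - {v0}. u v *\<^sub>R v)"
      by (rule minus_unique)
    have "(\<Sum>v\<in>S - {v0}. u v *\<^sub>R v) \<in> ?C"
      using S by (intro ac_sum) auto
    then have m: "- (u v0 *\<^sub>R v0) \<in> ?C" using eq by simp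
    have p: "u v0 *\<^sub>R v0 \<in> ?C" using S v0 by (intro ac_scale) auto
    have "u v0 *\<^sub>R v0 = 0" using ac_pointed[OF ne noline p m] .
    then have "v0 = 0" using v0 by simp
    then show False using S(2) v0(1) by auto
  qed
  obtain a b where ab: "a \<noteq> 0" "0 < b" "\<forall>x\<in>?S. inner a x > b"
    using separating_hyperplane_closed_0[OF convex_convex_hull compact_imp_closed[OF cS] 0] by blast
  have "a \<bullet> w \<ge> b * norm w" if w: "w \<in> ?C" for w
  proof (cases "w = 0")
    case True then show ?thesis by simp
  next
    case False
    have "(1 / norm w) *\<^sub>R w \<in> ?C" using w by (intro ac_scale) auto
    moreover have "(1 / norm w) *\<^sub>R w \<in> sphere 0 1" using False by simp
    ultimately have "(1 / norm w) *\<^sub>R w \<in> ?S" by (intro hull_inc) simp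
    then have "a \<bullet> ((1 / norm w) *\<^sub>R w) > b" using ab(3) by blast
    then have "(a \<bullet> w) / norm w > b" by (simp add: inner_commute)
    then show ?thesis using False by (simp add: field_simps)
  qed
  then show ?thesis using ab(2) by blast
qed

lemma sublevel_bounded:
  fixes \<Omega> :: "'a::euclidean_space set"
  assumes opn: "open \<Omega>" and cvx: "convex \<Omega>" and ne: "\<Omega> \<noteq> {}"
    and mu: "\<mu> > 0" and a: "\<forall>w\<in>asymptotic_cone \<Omega>. a \<bullet> w \<ge> \<mu> * norm w"
  shows "bounded {f \<in> closure \<Omega>. a \<bullet> f \<le> T}"
proof (rule ccontr)
  let ?S = "{f \<in> closure \<Omega>. a \<bullet> f \<le> T}"
  assume nb: "\<not> bounded ?S"
  obtain z where z: "z \<in> \<Omega>" using ne by blast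
  have zc: "z \<in> closure \<Omega>" using z closure_subset by blast
  have "\<exists>f. f \<in> ?S \<and> norm (f - z) \<ge> real n + 1" for n
  proof -
    from nb have "\<not> (\<forall>x\<in>?S. norm x \<le> real n + 1 + norm z)"
      unfolding bounded_iff by blast
    then obtain f where f: "f \<in> ?S" "norm f > real n + 1 + norm z" by auto
    have "norm f \<le> norm (f - z) + norm z" using norm_triangle_ineq[of "f - z" z] by simp
    then show ?thesis using f by (intro exI[of _ f]) auto
  qed
  then obtain f where f: "\<And>n. f n \<in> ?S" "\<And>n. norm (f n - z) \<ge> real n + 1" by metis
  define N where "N n = norm (f n - z)" for n
  have Npos: "N n \<ge> real n + 1" for n using f(2) by (simp add: N_def)
  define d where "d n = (1 / N n) *\<^sub>R (f n - z)" for n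
  have dsph: "d n \<in> sphere 0 1" for n
  proof -
    have "N n > 0" using Npos[of n] by linarith
    then show ?thesis by (simp add: d_def N_def)
  qed
  obtain d0 r where d0: "d0 \<in> sphere 0 1" and r: "strict_mono (r :: nat \<Rightarrow> nat)"
    and lim: "(d \<circ> r) \<longlonglongrightarrow> d0"
    using seq_compactE[OF compact_imp_seq_compact[OF compact_sphere] ] dsph by metis
  have ray: "z + t *\<^sub>R d0 \<in> closure \<Omega>" if t: "0 \<le> t" for t
  proof (rule Lim_in_closed_set[of "closure \<Omega>" "\<lambda>n. z + t *\<^sub>R d (r n)" sequentially])
    show "closed (closure \<Omega>)" by simp
    show "sequentially \<noteq> bot" by simp
    show "((\<lambda>n. z + t *\<^sub>R d (r n)) \<longlongrightarrow> z + t *\<^sub>R d0) sequentially"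
      using lim by (intro tendsto_intros) (simp add: comp_def)
    obtain m :: nat where m: "t \<le> real m" using real_arch_simple by blast
    show "\<forall>\<^sub>F n in sequentially. z + t *\<^sub>R d (r n) \<in> closure \<Omega>"
    proof (rule eventually_sequentiallyI[of m])
      fix n assume "m \<le> n"
      then have "m \<le> r n" using seq_suble[OF r, of n] by linarith
      then have tN: "t \<le> N (r n)" using Npos[of "r n"] m by linarith
      have Np: "N (r n) > 0" using Npos[of "r n"] by linarith
      define s where "s = t / N (r n)"
      have s01: "0 \<le> s" "s \<le> 1" using tN Np t by (auto simp: s_def)
      have "z + t *\<^sub>R d (r n) = (1 - s) *\<^sub>R z + s *\<^sub>R f (r n)"
        using Np by (simp add: d_def s_def algebra_simps)
      moreover have "(1 - s) *\<^sub>R z + s *\<^sub>R f (r n) \<in> closure \<Omega>"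
        using convexD_alt[OF convex_closure[OF cvx] zc, of "f (r n)" s] f(1) s01 by auto
      ultimately show "z + t *\<^sub>R d (r n) \<in> closure \<Omega>" by simp
    qed
  qed
  have "d0 \<in> asymptotic_cone \<Omega>" using ac_rec[OF opn cvx zc] ray by blast
  then have "a \<bullet> d0 \<ge> \<mu>" using a d0 by auto
  moreover have "a \<bullet> d0 \<le> 0"
  proof (rule LIMSEQ_le)
    show "(\<lambda>n. a \<bullet> d (r n)) \<longlonglongrightarrow> a \<bullet> d0"
      using lim by (intro tendsto_intros) (simp add: comp_def)
    show "(\<lambda>n. \<bar>T - a \<bullet> z\<bar> * inverse (real (Suc n))) \<longlonglongrightarrow> 0"
      using tendsto_mult[OF tendsto_const LIMSEQ_inverse_real_of_nat] by simp
    show "\<exists>N. \<forall>n\<ge>N. a \<bullet> d (r n) \<le> \<bar>T - a \<bullet> z\<bar> * inverse (real (Suc n))"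
    proof (intro exI allI impI)
      fix n :: nat
      have Np: "N (r n) \<ge> real n + 1" using Npos[of "r n"] seq_suble[OF r, of n] by linarith
      have "a \<bullet> d (r n) = (a \<bullet> f (r n) - a \<bullet> z) / N (r n)"
        by (simp add: d_def inner_diff_right)
      also have "\<dots> \<le> \<bar>T - a \<bullet> z\<bar> / N (r n)"
        using f(1)[of "r n"] Np by (intro divide_right_mono) auto
      also have "\<dots> \<le> \<bar>T - a \<bullet> z\<bar> / (real n + 1)"
        using Np by (intro divide_left_mono) auto
      finally show "a \<bullet> d (r n) \<le> \<bar>T - a \<bullet> z\<bar> * inverse (real (Suc n))"
        by (simp add: divide_inverse add.commute)
    qed
  qed
  ultimately show False using mu by linarith
qed

lemma lin_span_pres:
  fixes f :: "'a::euclidean_space \<Rightarrow> 'a"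
  assumes "linear f" "f ` S \<subseteq> S" "w \<in> span S"
  shows "f w \<in> span S"
proof -
  have "f w \<in> f ` span S" using assms(3) by blast
  also have "\<dots> = span (f ` S)" using linear_span_image[OF assms(1)] by simp
  also have "\<dots> \<subseteq> span S" using assms(2) by (simp add: span_mono span_minimal)
  finally show ?thesis .
qed

lemma group_elem:
  fixes \<Omega> :: "'a::euclidean_space set"
  assumes G: "affine_group_preserving G \<Omega>" and g: "g \<in> G"
  obtains P b where "linear P" "bij P" "\<And>z. g z = P z + b"
    "\<And>w. w \<in> asymptotic_cone \<Omega> \<Longrightarrow> P w \<in> asymptotic_cone \<Omega>"
    "\<And>w. w \<in> asymptotic_cone \<Omega> \<Longrightarrow> inv P w \<in> asymptotic_cone \<Omega>"
    "\<And>z. z \<in> \<Omega> \<Longrightarrow> g z \<in> \<Omega>"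
    "\<And>z. g z \<in> \<Omega> \<Longrightarrow> z \<in> \<Omega>"
    "\<And>z. g z \<in> closure \<Omega> \<Longrightarrow> z \<in> closure \<Omega>"
    "linear (inv P)" "\<And>w. P (inv P w) = w" "\<And>w. inv P (P w) = w"
proof -
  have at: "affine_transformation g" and gO: "g ` \<Omega> = \<Omega>"
    using G g unfolding affine_group_preserving_def by auto
  obtain P b where P: "linear P" "bij P" "\<And>z. g z = P z + b"
    using at unfolding affine_transformation_def by blast
  have PQ: "P (inv P w) = w" for w using P(2) by (simp add: bij_is_surj surj_f_inv_f)
  have QP: "inv P (P w) = w" for w using P(2) by (simp add: bij_is_inj inv_f_f)
  have linQ: "linear (inv P)" using inj_linear_imp_inv_linear[OF P(1) bij_is_inj[OF P(2)]] .
  have inj: "inj g"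
  proof (rule injI)
    fix z1 z2 assume "g z1 = g z2"
    then have "P z1 = P z2" by (simp add: P(3))
    then show "z1 = z2" using QP by metis
  qed
  have pre: "\<exists>z'\<in>\<Omega>. g z' = z" if "z \<in> \<Omega>" for z
  proof -
    have "z \<in> g ` \<Omega>" using that gO by simp
    then show ?thesis by blast
  qed
  have fw: "z \<in> \<Omega> \<Longrightarrow> g z \<in> \<Omega>" for z using gO by (metis imageI)
  have bw: "g z \<in> \<Omega> \<Longrightarrow> z \<in> \<Omega>" for z
  proof -
    assume "g z \<in> \<Omega>"
    then obtain z' where "z' \<in> \<Omega>" "g z' = g z" using pre by blast
    then show ?thesis using inj by (metis injD)
  qed
  have c1: "P w \<in> asymptotic_cone \<Omega>" if w: "w \<in> asymptotic_cone \<Omega>" for w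
  proof (rule acI)
    fix z t assume z: "z \<in> \<Omega>" and t: "(0::real) \<le> t"
    obtain z' where z': "z' \<in> \<Omega>" "g z' = z" using pre z by blast
    have "g (z' + t *\<^sub>R w) \<in> \<Omega>" using fw acD[OF w z'(1) t] by blast
    also have "g (z' + t *\<^sub>R w) = z + t *\<^sub>R P w"
      using z'(2) P(1) by (simp add: P(3) linear_add linear_scale algebra_simps)
    finally show "z + t *\<^sub>R P w \<in> \<Omega>" .
  qed
  have c2: "inv P w \<in> asymptotic_cone \<Omega>" if w: "w \<in> asymptotic_cone \<Omega>" for w
  proof (rule acI)
    fix z t assume z: "z \<in> \<Omega>" and t: "(0::real) \<le> t"
    have "g z + t *\<^sub>R w \<in> \<Omega>" using acD[OF w fw[OF z] t] .
    also have "g z + t *\<^sub>R w = g (z + t *\<^sub>R inv P w)"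
      using P(1) PQ by (simp add: P(3) linear_add linear_scale algebra_simps)
    finally show "z + t *\<^sub>R inv P w \<in> \<Omega>" using bw by blast
  qed
  have cl: "z \<in> closure \<Omega>" if gz: "g z \<in> closure \<Omega>" for z
  proof -
    let ?h = "\<lambda>f. inv P (f - b)"
    have hg: "?h (g z') = z'" for z' using QP by (simp add: P(3))
    have "?h ` closure \<Omega> \<subseteq> closure \<Omega>"
    proof (rule image_closure_subset)
      have bl: "bounded_linear (inv P)" using linQ linear_conv_bounded_linear by blast
      show "continuous_on (closure \<Omega>) ?h"
        by (intro bounded_linear.continuous_on[OF bl] continuous_intros)
      show "?h ` \<Omega> \<subseteq> closure \<Omega>"
      proof
        fix f assume "f \<in> ?h ` \<Omega>"
        then obtain f' where f': "f' \<in> \<Omega>" "f = ?h f'" by blast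
        obtain z' where "z' \<in> \<Omega>" "g z' = f'" using pre f'(1) by blast
        then show "f \<in> closure \<Omega>" using f' hg closure_subset by fastforce
      qed
    qed simp
    then show ?thesis using gz hg[of z] by (metis image_subset_iff)
  qed
  show ?thesis using that[OF P c1 c2 fw bw cl linQ PQ QP] .
qed

lemma ac_relint:
  fixes \<Omega> :: "'a::euclidean_space set"
  shows "\<exists>c0 \<rho>. c0 \<in> asymptotic_cone \<Omega> \<and> \<rho> > 0 \<and>
     (\<forall>u\<in>span (asymptotic_cone \<Omega>). norm u \<le> \<rho> \<longrightarrow> c0 + u \<in> asymptotic_cone \<Omega>)"
proof -
  let ?C = "asymptotic_cone \<Omega>"
  have ne: "?C \<noteq> {}" using ac_zero by blast
  then have "rel_interior ?C \<noteq> {}" using rel_interior_eq_empty[OF ac_convex] by blast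
  then obtain c0 where "c0 \<in> rel_interior ?C" by blast
  then obtain e where c0: "c0 \<in> ?C" and e: "e > 0" "ball c0 e \<inter> affine hull ?C \<subseteq> ?C"
    unfolding mem_rel_interior_ball by blast
  have "0 \<in> affine hull ?C" using ac_zero by (rule hull_inc)
  then have ah: "affine hull ?C = span ?C" by (rule affine_hull_span_0)
  have "c0 + u \<in> ?C" if u: "u \<in> span ?C" "norm u \<le> e/2" for u
  proof -
    have "c0 + u \<in> ball c0 e" using u e by (simp add: dist_norm)
    moreover have "c0 + u \<in> span ?C" using u c0 by (simp add: span_add span_base)
    ultimately have "c0 + u \<in> ball c0 e \<inter> affine hull ?C" using ah by simp
    then show ?thesis using e(2) by (meson subsetD)
  qed
  moreover have "e/2 > 0" using e by simp
  ultimately show ?thesis using c0 by blast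
qed

lemma decomp_bound:
  fixes T :: "'a::euclidean_space \<Rightarrow> 'a"
  assumes lin: "linear T" and rho: "\<rho> > 0"
    and c0: "\<And>u. u \<in> span C \<Longrightarrow> norm u \<le> \<rho> \<Longrightarrow> c0 + u \<in> C"
    and half: "\<And>w. w \<in> C \<Longrightarrow> (1/2) *\<^sub>R w \<in> C"
    and B: "\<And>w'. w' \<in> C \<Longrightarrow> c0 - w' \<in> C \<Longrightarrow> norm w' \<le> norm c0 + \<rho> \<Longrightarrow> norm (T w') \<le> B"
    and w: "w \<in> span C"
  shows "norm (T w) \<le> 2 * B / \<rho> * norm w"
proof (cases "w = 0")
  case True
  have "T 0 = 0" using lin by (rule linear_0)
  moreover have "norm (T w') \<ge> 0" for w' by simp
  ultimately show ?thesis using True by simp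
next
  case False
  define s where "s = \<rho> / norm w"
  have s0: "s > 0" using False rho by (simp add: s_def)
  have ns: "norm (s *\<^sub>R w) = \<rho>" using False rho s0 by (simp add: s_def)
  have swL: "s *\<^sub>R w \<in> span C" "- (s *\<^sub>R w) \<in> span C" using w by (auto intro: span_scale span_neg)
  have p1: "c0 + s *\<^sub>R w \<in> C" using c0[OF swL(1)] ns by simp
  have p2: "c0 - s *\<^sub>R w \<in> C" using c0[OF swL(2)] ns by simp
  define w1 where "w1 = (1/2) *\<^sub>R (c0 + s *\<^sub>R w)"
  define w2 where "w2 = (1/2) *\<^sub>R (c0 - s *\<^sub>R w)"
  have cc: "c0 = (1/2) *\<^sub>R c0 + (1/2) *\<^sub>R c0" by (simp add: scaleR_left_distrib[symmetric])
  have e1: "c0 - w1 = w2" "c0 - w2 = w1"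
    by (subst cc, simp add: w1_def w2_def algebra_simps)+
  have h1: "w1 \<in> C" using half[OF p1] by (simp add: w1_def)
  have h2: "w2 \<in> C" using half[OF p2] by (simp add: w2_def)
  have w1C: "w1 \<in> C" "c0 - w1 \<in> C" using h1 h2 e1 by simp_all
  have w2C: "w2 \<in> C" "c0 - w2 \<in> C" using h1 h2 e1 by simp_all
  have "norm w1 \<le> (1/2) * (norm c0 + norm (s *\<^sub>R w))"
    unfolding w1_def using norm_triangle_ineq[of c0 "s *\<^sub>R w"] by simp
  then have nw1: "norm w1 \<le> norm c0 + \<rho>" using ns rho norm_ge_zero[of w1] norm_ge_zero[of c0] by argo
  have "norm w2 \<le> (1/2) * (norm c0 + norm (s *\<^sub>R w))"
    unfolding w2_def using norm_triangle_ineq4[of c0 "s *\<^sub>R w"] by simp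
  then have nw2: "norm w2 \<le> norm c0 + \<rho>" using ns rho norm_ge_zero[of w2] norm_ge_zero[of c0] by argo
  have "w1 - w2 = s *\<^sub>R w" by (simp add: w1_def w2_def algebra_simps scaleR_left_distrib[symmetric])
  then have "T w1 - T w2 = s *\<^sub>R T w" using lin by (simp add: linear_diff[symmetric] linear_scale)
  then have "s * norm (T w) = norm (T w1 - T w2)" using s0 by simp
  also have "\<dots> \<le> norm (T w1) + norm (T w2)" by (rule norm_triangle_ineq4)
  also have "\<dots> \<le> 2 * B" using B[OF w1C nw1] B[OF w2C nw2] by simp
  finally have "s * norm (T w) \<le> 2 * B" .
  then have "norm (T w) \<le> 2 * B / s" using s0 by (simp add: field_simps)
  then show ?thesis using False rho by (simp add: s_def field_simps)
qed

lemma step_lemma: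
  fixes \<Omega> :: "'a::euclidean_space set"
  assumes opn: "open \<Omega>" and cvx: "convex \<Omega>"
    and G: "affine_group_preserving G \<Omega>" and GK: "(\<Union>g\<in>G. g ` K) = \<Omega>"
    and r: "r > 0" "\<forall>y\<in>K. cball y r \<subseteq> \<Omega>"
    and R0: "\<forall>y\<in>K. norm y \<le> R0" and TK: "\<forall>y\<in>K. a \<bullet> y \<le> T"
    and R: "\<forall>z\<in>closure \<Omega>. a \<bullet> z \<le> T \<longrightarrow> norm z \<le> R"
    and mu: "\<mu> > 0" and a: "\<forall>w\<in>asymptotic_cone \<Omega>. a \<bullet> w \<ge> \<mu> * norm w"
    and c0: "c0 \<in> asymptotic_cone \<Omega>" and rho: "\<rho> > 0"
    and c0r: "\<forall>u\<in>span (asymptotic_cone \<Omega>). norm u \<le> \<rho> \<longrightarrow> c0 + u \<in> asymptotic_cone \<Omega>"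
    and x: "x \<in> \<Omega>" and q: "q \<in> closure \<Omega>" "q - x \<in> span (asymptotic_cone \<Omega>)"
    and qmin: "\<forall>f. f \<in> \<Omega> \<longrightarrow> f - x \<in> span (asymptotic_cone \<Omega>) \<longrightarrow> a \<bullet> q \<le> a \<bullet> f"
    and ac: "a \<bullet> (x - q + c0) \<ge> 0"
    and eps: "0 < \<epsilon>" "\<epsilon> \<le> 1"
  shows "\<exists>y P. y \<in> K \<and> linear P \<and> linear (inv P) \<and> (\<forall>w. P (inv P w) = w)
     \<and> (\<forall>w\<in>span (asymptotic_cone \<Omega>). inv P w \<in> span (asymptotic_cone \<Omega>))
     \<and> (\<forall>w\<in>span (asymptotic_cone \<Omega>). norm (P w) \<le> (2 * ((a \<bullet> (x - q + c0)) * (norm c0 + \<rho>) / (\<mu> * r)) / \<rho>) * \<epsilon> * norm w)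
     \<and> (\<forall>w\<in>span (asymptotic_cone \<Omega>). norm (\<epsilon> *\<^sub>R inv P w) \<le> (2 * (R0 + R) / \<rho>) * norm w)
     \<and> (\<forall>f\<in>closure \<Omega>. y + inv P (f - (q + \<epsilon> *\<^sub>R (x - q + c0))) \<in> closure \<Omega>)
     \<and> (\<forall>w\<in>asymptotic_cone \<Omega>. P w \<in> asymptotic_cone \<Omega>)"
proof -
  define C where "C = asymptotic_cone \<Omega>"
  define L where "L = span C"
  define c where "c = x - q + c0"
  note defs = C_def[symmetric] L_def[symmetric] c_def[symmetric]
  have CL: "C \<subseteq> L" unfolding L_def by (rule span_superset)
  have aC: "w \<in> C \<Longrightarrow> a \<bullet> w \<ge> 0" for w
    using a mu unfolding C_def by (meson mult_nonneg_nonneg less_imp_le norm_ge_zero order_trans)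
  define z0 where "z0 = (1 - (1 - \<epsilon>)) *\<^sub>R x + (1 - \<epsilon>) *\<^sub>R q"
  have z0O: "z0 \<in> \<Omega>" unfolding z0_def using seg_int_cl[OF opn cvx x q(1), of "1 - \<epsilon>"] eps by simp
  have z0L: "z0 - x \<in> L"
  proof -
    have "z0 - x = (1 - \<epsilon>) *\<^sub>R (q - x)" by (simp add: z0_def algebra_simps)
    then show ?thesis using q(2) unfolding L_def C_def by (simp add: span_scale)
  qed
  define xe where "xe = q + \<epsilon> *\<^sub>R c"
  have xe_eq: "xe = z0 + \<epsilon> *\<^sub>R c0" by (simp add: xe_def z0_def c_def algebra_simps)
  have ec0: "\<epsilon> *\<^sub>R c0 \<in> C" using c0 eps unfolding C_def by (intro ac_scale) auto
  have xeO: "xe \<in> \<Omega>" unfolding xe_eq using ac_add[OF z0O] ec0 unfolding C_def by blast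
  have xeL: "xe - x \<in> L"
  proof -
    have e: "xe - x = (z0 - x) + \<epsilon> *\<^sub>R c0" by (simp add: xe_eq algebra_simps)
    have "\<epsilon> *\<^sub>R c0 \<in> L" using ec0 CL by blast
    then show ?thesis unfolding e using z0L unfolding L_def by (rule span_add[rotated])
  qed
  obtain g y where g: "g \<in> G" and y: "y \<in> K" and gy: "g y = xe"
    using xeO GK by (metis (no_types, lifting) UN_iff imageE)
  obtain P b where P: "linear P" "bij P" "\<And>z. g z = P z + b"
    and PC: "\<And>w. w \<in> C \<Longrightarrow> P w \<in> C"
    and QC: "\<And>w. w \<in> C \<Longrightarrow> inv P w \<in> C"
    and fw: "\<And>z. z \<in> \<Omega> \<Longrightarrow> g z \<in> \<Omega>"
    and bw: "\<And>z. g z \<in> \<Omega> \<Longrightarrow> z \<in> \<Omega>"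
    and bwc: "\<And>z. g z \<in> closure \<Omega> \<Longrightarrow> z \<in> closure \<Omega>"
    and linQ: "linear (inv P)" and PQ: "\<And>w. P (inv P w) = w" and QP: "\<And>w. inv P (P w) = w"
    using group_elem[OF G g] unfolding C_def by metis
  define Q where "Q = inv P"
  have QL: "\<forall>w\<in>L. Q w \<in> L"
    unfolding L_def Q_def using lin_span_pres[OF linQ, of C] QC by blast
  have PC': "\<forall>w\<in>C. P w \<in> C" using PC by blast
  have half: "\<And>w. w \<in> C \<Longrightarrow> (1/2) *\<^sub>R w \<in> C" unfolding C_def by (intro ac_scale) auto
  have c0r': "\<And>u. u \<in> L \<Longrightarrow> norm u \<le> \<rho> \<Longrightarrow> c0 + u \<in> C" using c0r unfolding L_def C_def by blast
  have gyP: "P y + b = xe" using gy P(3) by simp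
  have PbC: "norm (P w) \<le> \<epsilon> * (a \<bullet> c) / (\<mu> * r) * norm w" if w: "w \<in> C" for w
  proof (cases "w = 0")
    case True
    then show ?thesis using linear_0[OF P(1)] by simp
  next
    case False
    define u where "u = - (r / norm w) *\<^sub>R w"
    have "norm u = r" using False r by (simp add: u_def)
    then have "y + u \<in> cball y r" by (simp add: dist_norm)
    then have yu: "y + u \<in> \<Omega>" using r y by blast
    have Pu: "P u = - (r / norm w) *\<^sub>R P w" using P(1) by (simp add: u_def linear_scale linear_neg)
    have "g (y + u) = xe + P u" using P(1) gyP by (simp add: P(3) linear_add algebra_simps)
    then have p1: "xe + P u \<in> \<Omega>" using fw[OF yu] by simp
    have "P w \<in> L" using PC[OF w] CL by blast
    then have "P u \<in> L" unfolding Pu L_def by (intro span_neg span_scale)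
    then have p2: "(xe + P u) - x \<in> L" using xeL unfolding L_def
      by (metis add_diff_eq diff_add_eq span_add)
    have "a \<bullet> q \<le> a \<bullet> (xe + P u)" using qmin p1 p2 unfolding L_def C_def by blast
    also have "a \<bullet> (xe + P u) = a \<bullet> q + \<epsilon> * (a \<bullet> c) - (r / norm w) * (a \<bullet> P w)"
      by (simp add: xe_def Pu inner_add_right inner_diff_right)
    finally have i1: "(r / norm w) * (a \<bullet> P w) \<le> \<epsilon> * (a \<bullet> c)" by simp
    have "\<mu> * norm (P w) \<le> a \<bullet> P w" using a PC[OF w] unfolding C_def by blast
    then have "(r / norm w) * (\<mu> * norm (P w)) \<le> (r / norm w) * (a \<bullet> P w)"
      using r by (intro mult_left_mono) auto
    then have "(r / norm w) * (\<mu> * norm (P w)) \<le> \<epsilon> * (a \<bullet> c)" using i1 by linarith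
    then show ?thesis using False r mu by (simp add: field_simps)
  qed
  have Pb: "norm (P w) \<le> (2 * ((a \<bullet> c) * (norm c0 + \<rho>) / (\<mu> * r)) / \<rho>) * \<epsilon> * norm w"
    if w: "w \<in> L" for w
  proof -
    have "norm (P w) \<le> 2 * (\<epsilon> * (a \<bullet> c) / (\<mu> * r) * (norm c0 + \<rho>)) / \<rho> * norm w"
    proof (rule decomp_bound[OF P(1) rho c0r' half _ w[unfolded L_def]])
      fix w' assume "w' \<in> C" "c0 - w' \<in> C" "norm w' \<le> norm c0 + \<rho>"
      have "norm (P w') \<le> \<epsilon> * (a \<bullet> c) / (\<mu> * r) * norm w'" using PbC[OF \<open>w' \<in> C\<close>] .
      also have "\<dots> \<le> \<epsilon> * (a \<bullet> c) / (\<mu> * r) * (norm c0 + \<rho>)"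
        using \<open>norm w' \<le> norm c0 + \<rho>\<close> eps ac mu r unfolding c_def
        by (intro mult_left_mono) auto
      finally show "norm (P w') \<le> \<epsilon> * (a \<bullet> c) / (\<mu> * r) * (norm c0 + \<rho>)" .
    qed (auto simp: L_def)
    then show ?thesis by (simp add: field_simps)
  qed
  have QbC: "norm (Q w') \<le> (R0 + R) / \<epsilon>" if w': "w' \<in> C" "c0 - w' \<in> C" for w'
  proof -
    define zq where "zq = y - \<epsilon> *\<^sub>R Q w'"
    have "g zq = xe - \<epsilon> *\<^sub>R w'"
      using P(1) gyP PQ by (simp add: zq_def Q_def P(3) linear_diff linear_scale algebra_simps)
    also have "\<dots> = z0 + \<epsilon> *\<^sub>R (c0 - w')" by (simp add: xe_eq algebra_simps)
    finally have "g zq \<in> \<Omega>"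
      using ac_add[OF z0O, of "\<epsilon> *\<^sub>R (c0 - w')"] ac_scale[of "c0 - w'" \<Omega> \<epsilon>] w' eps
      unfolding C_def by simp
    then have zqO: "zq \<in> closure \<Omega>" using bw closure_subset by blast
    have "a \<bullet> Q w' \<ge> 0" using aC QC[OF w'(1)] by (simp add: Q_def)
    then have "a \<bullet> zq \<le> a \<bullet> y" using eps by (simp add: zq_def inner_diff_right)
    then have "a \<bullet> zq \<le> T" using TK y by fastforce
    then have nz: "norm zq \<le> R" using R zqO by blast
    have "\<epsilon> *\<^sub>R Q w' = y - zq" by (simp add: zq_def)
    then have "\<epsilon> * norm (Q w') = norm (y - zq)" using eps by (metis norm_scaleR abs_of_pos)
    also have "\<dots> \<le> norm y + norm zq" by (rule norm_triangle_ineq4)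
    also have "\<dots> \<le> R0 + R" using R0 y nz by fastforce
    finally show ?thesis using eps by (simp add: field_simps)
  qed
  have Qb: "norm (\<epsilon> *\<^sub>R Q w) \<le> (2 * (R0 + R) / \<rho>) * norm w" if w: "w \<in> L" for w
  proof -
    have "norm (Q w) \<le> 2 * ((R0 + R) / \<epsilon>) / \<rho> * norm w"
      using decomp_bound[OF linQ[folded Q_def] rho c0r' half QbC w[unfolded L_def]] by (simp add: L_def)
    then have "\<epsilon> * norm (Q w) \<le> \<epsilon> * (2 * ((R0 + R) / \<epsilon>) / \<rho> * norm w)"
      using eps by (intro mult_left_mono) auto
    moreover have "\<epsilon> * (2 * ((R0 + R) / \<epsilon>) / \<rho> * norm w) = 2 * (R0 + R) / \<rho> * norm w"
      using eps by simp
    ultimately show ?thesis using eps by simp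
  qed
  have Qcl: "y + Q (f - xe) \<in> closure \<Omega>" if f: "f \<in> closure \<Omega>" for f
  proof -
    have "g (y + Q (f - xe)) = f"
      using P(1) gyP PQ by (simp add: Q_def P(3) linear_add algebra_simps)
    then show ?thesis using bwc f by metis
  qed
  show ?thesis
    apply (rule exI[of _ y], rule exI[of _ P])
    using y P(1) linQ PQ QL Pb Qb Qcl PC' unfolding Q_def L_def C_def c_def xe_def
    by blast
qed

lemma main_fiber:
  fixes \<Omega> :: "'a::euclidean_space set"
  assumes opn: "open \<Omega>" and cvx: "convex \<Omega>" and ne: "\<Omega> \<noteq> {}"
    and noline: "\<not> (\<exists>x v. v \<noteq> 0 \<and> (\<forall>t::real. x + t *\<^sub>R v \<in> \<Omega>))"
    and K: "compact K" "K \<subseteq> \<Omega>" and G: "affine_group_preserving G \<Omega>"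
    and GK: "(\<Union>g\<in>G. g ` K) = \<Omega>"
    and x: "x \<in> \<Omega>"
  shows "\<exists>p. closure (\<Omega> \<inter> (\<lambda>v. x + v) ` span (asymptotic_cone \<Omega>)) = (\<lambda>u. p + u) ` asymptotic_cone \<Omega>"
proof -
  define C where "C = asymptotic_cone \<Omega>"
  define L where "L = span C"
  define X where "X = (\<lambda>v. x + v) ` L"
  define F where "F = closure (\<Omega> \<inter> X)"
  have memX: "y \<in> X \<longleftrightarrow> y - x \<in> L" for y
  proof
    assume "y \<in> X" then show "y - x \<in> L" unfolding X_def by auto
  next
    assume "y - x \<in> L" then show "y \<in> X" unfolding X_def by (rule image_eqI[rotated]) simp
  qed
  have CL: "C \<subseteq> L" unfolding L_def by (rule span_superset)
  have Ccl: "closed C" unfolding C_def by (rule ac_closed[OF opn cvx ne])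
  have closedX: "closed X"
  proof -
    have "closed ((+) x ` L)" unfolding L_def by (intro closed_translation closed_span)
    moreover have "(+) x ` L = X" unfolding X_def by simp
    ultimately show ?thesis by simp
  qed
  have FL: "f - x \<in> L" if "f \<in> F" for f
  proof -
    have "F \<subseteq> closure X" unfolding F_def by (intro closure_mono) blast
    then have "f \<in> X" using that closedX closure_closed by blast
    then show ?thesis using memX by blast
  qed
  have FclO: "F \<subseteq> closure \<Omega>" unfolding F_def by (intro closure_mono) blast
  have OXF: "y \<in> F" if "y \<in> \<Omega>" "y - x \<in> L" for y
    using that memX closure_subset unfolding F_def by blast
  have xF: "x \<in> F" using OXF[OF x] unfolding L_def by (simp add: span_zero)
  have Fcl: "closed F" unfolding F_def by simp
  have FC: "f + w \<in> F" if f: "f \<in> F" and w: "w \<in> C" for f w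
  proof -
    have "(\<lambda>y. y + w) ` closure (\<Omega> \<inter> X) \<subseteq> F"
    proof (rule image_closure_subset)
      show "continuous_on (closure (\<Omega> \<inter> X)) (\<lambda>y. y + w)" by (intro continuous_intros)
      show "closed F" by (rule Fcl)
      show "(\<lambda>y. y + w) ` (\<Omega> \<inter> X) \<subseteq> F"
      proof
        fix z assume "z \<in> (\<lambda>y. y + w) ` (\<Omega> \<inter> X)"
        then obtain y where y: "y \<in> \<Omega>" "y \<in> X" "z = y + w" by blast
        have "y + w \<in> \<Omega>" using ac_add[OF y(1)] w unfolding C_def by blast
        moreover have "(y + w) - x \<in> L"
        proof -
          have "(y + w) - x = (y - x) + w" by simp
          moreover have "y - x \<in> L" using y(2) memX by blast
          moreover have "w \<in> L" using w CL by blast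
          ultimately show ?thesis unfolding L_def by (metis span_add)
        qed
        ultimately show "z \<in> F" using OXF y(3) by blast
      qed
    qed
    then show ?thesis using f unfolding F_def by blast
  qed
  obtain a \<mu> where mu: "\<mu> > 0" and a: "\<forall>w\<in>C. a \<bullet> w \<ge> \<mu> * norm w"
    using ac_functional[OF opn cvx ne noline] unfolding C_def by blast
  have aC: "w \<in> C \<Longrightarrow> a \<bullet> w \<ge> 0" for w
    using a mu by (meson mult_nonneg_nonneg less_imp_le norm_ge_zero order_trans)
  have bnd: "bounded {f \<in> closure \<Omega>. a \<bullet> f \<le> a \<bullet> x}"
    using sublevel_bounded[OF opn cvx ne mu] a unfolding C_def by blast
  define S where "S = F \<inter> {f. a \<bullet> f \<le> a \<bullet> x}"
  have Scomp: "compact S"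
  proof -
    have "closed S" unfolding S_def using Fcl by (intro closed_Int closed_halfspace_le)
    moreover have "S \<subseteq> {f \<in> closure \<Omega>. a \<bullet> f \<le> a \<bullet> x}" using FclO unfolding S_def by blast
    then have "bounded S" using bnd by (metis bounded_subset)
    ultimately show ?thesis by (simp add: compact_eq_bounded_closed)
  qed
  have "S \<noteq> {}" using xF unfolding S_def by blast
  moreover have "continuous_on S (\<lambda>f. a \<bullet> f)" by (intro continuous_intros)
  ultimately obtain q where qS: "q \<in> S" and qmS: "\<forall>f\<in>S. a \<bullet> q \<le> a \<bullet> f"
    using continuous_attains_inf[OF Scomp, of "\<lambda>f. a \<bullet> f"] by blast
  have qF: "q \<in> F" using qS unfolding S_def by blast
  have qmin: "a \<bullet> q \<le> a \<bullet> f" if "f \<in> F" for f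
  proof (cases "a \<bullet> f \<le> a \<bullet> x")
    case True then show ?thesis using qmS that unfolding S_def by blast
  next
    case False then show ?thesis using qmS qS unfolding S_def by auto
  qed
  have key: "f - q \<in> C" if f: "f \<in> F" for f
  proof (rule ccontr)
    define v where "v = f - q"
    assume nv: "f - q \<notin> C"
    then have nvC: "v \<notin> C" by (simp add: v_def)
    obtain c0 \<rho> where c0: "c0 \<in> C" and rho: "\<rho> > 0"
      and c0r: "\<forall>u\<in>L. norm u \<le> \<rho> \<longrightarrow> c0 + u \<in> C"
      using ac_relint[of \<Omega>] unfolding C_def L_def by blast
    obtain r where r: "r > 0" "(\<Union>y\<in>K. cball y r) \<subseteq> \<Omega>"
      using compact_subset_open_imp_cball_epsilon_subset[OF K(1) opn K(2)] by blast
    have rK: "\<forall>y\<in>K. cball y r \<subseteq> \<Omega>" using r(2) by blast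
    obtain R0 where R0: "\<forall>y\<in>K. norm y \<le> R0"
      using compact_imp_bounded[OF K(1)] unfolding bounded_iff by blast
    define T where "T = norm a * R0"
    have TK: "\<forall>y\<in>K. a \<bullet> y \<le> T"
    proof
      fix y assume "y \<in> K"
      have "a \<bullet> y \<le> norm a * norm y" by (rule norm_cauchy_schwarz)
      also have "\<dots> \<le> norm a * R0" using R0 \<open>y \<in> K\<close> by (intro mult_left_mono) auto
      finally show "a \<bullet> y \<le> T" by (simp add: T_def)
    qed
    obtain R where R: "\<forall>z\<in>{f \<in> closure \<Omega>. a \<bullet> f \<le> T}. norm z \<le> R"
      using sublevel_bounded[OF opn cvx ne mu, of a T] a unfolding C_def bounded_iff by blast
    have R': "\<forall>z\<in>closure \<Omega>. a \<bullet> z \<le> T \<longrightarrow> norm z \<le> R" using R by blast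
    have qcl: "q \<in> closure \<Omega>" using qF FclO by blast
    have qL: "q - x \<in> L" using FL[OF qF] .
    have qmin': "\<forall>f. f \<in> \<Omega> \<longrightarrow> f - x \<in> L \<longrightarrow> a \<bullet> q \<le> a \<bullet> f"
      using qmin OXF by blast
    define c where "c = x - q + c0"
    have ac: "a \<bullet> c \<ge> 0"
    proof -
      have "a \<bullet> q \<le> a \<bullet> x" using qmin[OF xF] .
      moreover have "a \<bullet> c0 \<ge> 0" using aC[OF c0] .
      ultimately show ?thesis by (simp add: c_def inner_add_right inner_diff_right)
    qed
    define \<kappa> where "\<kappa> = 2 * (R0 + R) / \<rho>"
    define \<kappa>' where "\<kappa>' = 2 * ((a \<bullet> (x - q + c0)) * (norm c0 + \<rho>) / (\<mu> * r)) / \<rho>"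
    define eps where "eps k = 1 / real (Suc k)" for k
    have eps: "0 < eps k" "eps k \<le> 1" for k by (auto simp: eps_def)
    let ?\<Phi> = "\<lambda>k y P. y \<in> K \<and> linear P \<and> linear (inv P) \<and> (\<forall>w. P (inv P w) = w)
     \<and> (\<forall>w\<in>L. inv P w \<in> L)
     \<and> (\<forall>w\<in>L. norm (P w) \<le> \<kappa>' * eps k * norm w)
     \<and> (\<forall>w\<in>L. norm (eps k *\<^sub>R inv P w) \<le> \<kappa> * norm w)
     \<and> (\<forall>f\<in>closure \<Omega>. y + inv P (f - (q + eps k *\<^sub>R c)) \<in> closure \<Omega>)
     \<and> (\<forall>w\<in>C. P w \<in> C)"
    have "\<forall>k. \<exists>y P. ?\<Phi> k y P"
    proof
      fix k
      show "\<exists>y P. ?\<Phi> k y P"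
        using step_lemma[OF opn cvx G GK r(1) rK R0 TK R' mu a[unfolded C_def] c0[unfolded C_def] rho
            c0r[unfolded C_def L_def] x qcl qL[unfolded L_def C_def] qmin'[unfolded L_def C_def]
            ac[unfolded c_def] eps(1)[of k] eps(2)[of k]]
        unfolding \<kappa>_def \<kappa>'_def C_def[symmetric] L_def[symmetric] c_def[symmetric] .
    qed
    then obtain Y PP where YP: "\<And>k. ?\<Phi> k (Y k) (PP k)" by metis
    define Q where "Q k = inv (PP k)" for k
    define V where "V k = eps k *\<^sub>R Q k v" for k
    define W where "W k = eps k *\<^sub>R Q k c" for k
    have vL: "v \<in> L"
    proof -
      have "v = (f - x) - (q - x)" by (simp add: v_def)
      then show ?thesis using FL[OF f] qL unfolding L_def by (metis span_diff)
    qed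
    have cL: "c \<in> L"
    proof -
      have "c = (x - q) + c0" by (simp add: c_def)
      moreover have "x - q \<in> L" using qL unfolding L_def by (metis span_neg minus_diff_eq)
      ultimately show ?thesis using c0 CL unfolding L_def by (metis span_add subsetD)
    qed
    have Vb: "V k \<in> cball 0 (\<kappa> * norm v)" for k
      using YP[of k] vL by (simp add: V_def Q_def)
    have Wb: "W k \<in> cball 0 (\<kappa> * norm c)" for k
      using YP[of k] cL by (simp add: W_def Q_def)
    define Sq where "Sq k = (Y k, V k, W k)" for k
    have Sin: "\<forall>k. Sq k \<in> K \<times> (cball 0 (\<kappa> * norm v) \<times> cball 0 (\<kappa> * norm c))"
      using YP Vb Wb by (simp add: Sq_def)
    have cpt: "compact (K \<times> (cball (0::'a) (\<kappa> * norm v) \<times> cball (0::'a) (\<kappa> * norm c)))"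
      by (intro compact_Times K(1) compact_cball)
    obtain l rr where lin: "l \<in> K \<times> (cball 0 (\<kappa> * norm v) \<times> cball 0 (\<kappa> * norm c))"
      and rr: "strict_mono (rr :: nat \<Rightarrow> nat)" and lim: "(Sq \<circ> rr) \<longlonglongrightarrow> l"
      using seq_compactE[OF compact_imp_seq_compact[OF cpt] Sin] by blast
    define yl where "yl = fst l"
    define wl where "wl = fst (snd l)"
    define cl where "cl = snd (snd l)"
    have limY: "(\<lambda>n. Y (rr n)) \<longlonglongrightarrow> yl"
      using tendsto_fst[OF lim] by (simp add: yl_def Sq_def comp_def)
    have limV: "(\<lambda>n. V (rr n)) \<longlonglongrightarrow> wl"
      using tendsto_fst[OF tendsto_snd[OF lim]] by (simp add: wl_def Sq_def comp_def)
    have limW: "(\<lambda>n. W (rr n)) \<longlonglongrightarrow> cl"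
      using tendsto_snd[OF tendsto_snd[OF lim]] by (simp add: cl_def Sq_def comp_def)
    have ray: "(yl - cl) + \<tau> *\<^sub>R wl \<in> closure \<Omega>" if tau: "0 \<le> \<tau>" for \<tau>
    proof (rule Lim_in_closed_set[of "closure \<Omega>" "\<lambda>n. Y (rr n) + \<tau> *\<^sub>R V (rr n) - W (rr n)" sequentially])
      show "closed (closure \<Omega>)" by simp
      show "sequentially \<noteq> bot" by simp
      have "(\<lambda>n. Y (rr n) + \<tau> *\<^sub>R V (rr n) - W (rr n)) \<longlonglongrightarrow> yl + \<tau> *\<^sub>R wl - cl"
        using limY limV limW by (intro tendsto_intros)
      then show "(\<lambda>n. Y (rr n) + \<tau> *\<^sub>R V (rr n) - W (rr n)) \<longlonglongrightarrow> (yl - cl) + \<tau> *\<^sub>R wl"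
        by (simp add: algebra_simps)
      obtain m :: nat where m: "\<tau> \<le> real m" using real_arch_simple by blast
      show "\<forall>\<^sub>F n in sequentially. Y (rr n) + \<tau> *\<^sub>R V (rr n) - W (rr n) \<in> closure \<Omega>"
      proof (rule eventually_sequentiallyI[of m])
        fix n assume "m \<le> n"
        then have "m \<le> rr n" using seq_suble[OF rr, of n] by linarith
        define k where "k = rr n"
        have "\<tau> \<le> real (Suc k)" using m \<open>m \<le> rr n\<close> unfolding k_def by linarith
        then have et: "eps k * \<tau> \<le> 1" "0 \<le> eps k * \<tau>" using tau by (auto simp: eps_def field_simps)
        define pt where "pt = (1 - eps k * \<tau>) *\<^sub>R q + (eps k * \<tau>) *\<^sub>R f"
        have ptc: "pt \<in> closure \<Omega>"
          using convexD_alt[OF convex_closure[OF cvx] qcl, of f "eps k * \<tau>"] FclO f et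
          unfolding pt_def by blast
        have lQ: "linear (Q k)" using YP[of k] by (simp add: Q_def)
        have e1: "pt - (q + eps k *\<^sub>R c) = (eps k * \<tau>) *\<^sub>R v - eps k *\<^sub>R c"
          by (simp add: pt_def v_def algebra_simps)
        have "Q k (pt - (q + eps k *\<^sub>R c)) = Q k ((eps k * \<tau>) *\<^sub>R v - eps k *\<^sub>R c)"
          by (simp only: e1)
        also have "\<dots> = (eps k * \<tau>) *\<^sub>R Q k v - eps k *\<^sub>R Q k c"
          using lQ by (simp add: linear_diff linear_scale)
        also have "\<dots> = \<tau> *\<^sub>R V k - W k" by (simp add: V_def W_def)
        finally have "Q k (pt - (q + eps k *\<^sub>R c)) = \<tau> *\<^sub>R V k - W k" .
        moreover have "Y k + Q k (pt - (q + eps k *\<^sub>R c)) \<in> closure \<Omega>"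
          using YP[of k] ptc by (simp add: Q_def)
        ultimately have "Y k + (\<tau> *\<^sub>R V k - W k) \<in> closure \<Omega>" by simp
        then show "Y (rr n) + \<tau> *\<^sub>R V (rr n) - W (rr n) \<in> closure \<Omega>"
          unfolding k_def by (simp only: add_diff_eq)
      qed
    qed
    have wlC: "wl \<in> C"
      unfolding C_def
      using ac_rec[OF opn cvx, of "yl - cl" wl] ray[of 0] ray by simp
    have "v \<in> C"
    proof (rule Lim_in_closed_set[OF Ccl, of "\<lambda>n. (1 / eps (rr n)) *\<^sub>R PP (rr n) wl" sequentially])
      show "sequentially \<noteq> bot" by simp
      show "\<forall>\<^sub>F n in sequentially. (1 / eps (rr n)) *\<^sub>R PP (rr n) wl \<in> C"
      proof (rule always_eventually, rule allI)
        fix n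
        have "PP (rr n) wl \<in> C" using YP[of "rr n"] wlC by blast
        then show "(1 / eps (rr n)) *\<^sub>R PP (rr n) wl \<in> C"
          unfolding C_def using eps[of "rr n"] by (intro ac_scale) auto
      qed
      have "(\<lambda>n. (1 / eps (rr n)) *\<^sub>R PP (rr n) wl - v) \<longlonglongrightarrow> 0"
      proof (rule Lim_null_comparison)
        show "\<forall>\<^sub>F n in sequentially. norm ((1 / eps (rr n)) *\<^sub>R PP (rr n) wl - v) \<le> \<kappa>' * norm (wl - V (rr n))"
        proof (rule always_eventually, rule allI)
          fix n
          define k where "k = rr n"
          have Pk: "linear (PP k)" "\<forall>w. PP k (Q k w) = w" using YP[of k] by (auto simp: Q_def)
          have VL: "V k \<in> L" using YP[of k] vL unfolding V_def Q_def L_def by (simp add: span_scale)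
          have dL: "wl - V k \<in> L" using wlC CL VL unfolding L_def by (metis span_diff subsetD)
          have "PP k (V k) = eps k *\<^sub>R v" using Pk by (simp add: V_def linear_scale)
          then have "(1 / eps k) *\<^sub>R PP k wl - v = (1 / eps k) *\<^sub>R PP k (wl - V k)"
            using eps[of k] Pk(1) by (simp add: linear_diff algebra_simps)
          then have "norm ((1 / eps k) *\<^sub>R PP k wl - v) = (1 / eps k) * norm (PP k (wl - V k))"
            using eps[of k] by simp
          also have "\<dots> \<le> (1 / eps k) * (\<kappa>' * eps k * norm (wl - V k))"
            using YP[of k] dL eps[of k] by (intro mult_left_mono) auto
          also have "\<dots> = \<kappa>' * norm (wl - V k)" using eps[of k] by simp
          finally show "norm ((1 / eps (rr n)) *\<^sub>R PP (rr n) wl - v) \<le> \<kappa>' * norm (wl - V (rr n))"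
            by (simp add: k_def)
        qed
        have "(\<lambda>n. \<kappa>' * norm (wl - V (rr n))) \<longlonglongrightarrow> \<kappa>' * norm (wl - wl)"
          using limV by (intro tendsto_intros)
        then show "(\<lambda>n. \<kappa>' * norm (wl - V (rr n))) \<longlonglongrightarrow> 0" by simp
      qed
      then show "(\<lambda>n. (1 / eps (rr n)) *\<^sub>R PP (rr n) wl) \<longlonglongrightarrow> v"
        by (rule LIM_zero_cancel)
    qed
    then show False using nvC by simp
  qed
  have "F = (\<lambda>u. q + u) ` C"
  proof
    show "F \<subseteq> (\<lambda>u. q + u) ` C"
    proof
      fix f assume "f \<in> F"
      then have "f - q \<in> C" by (rule key)
      then show "f \<in> (\<lambda>u. q + u) ` C" by (rule image_eqI[rotated]) simp
    qed
    show "(\<lambda>u. q + u) ` C \<subseteq> F" using FC[OF qF] by blast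
  qed
  then show ?thesis unfolding F_def X_def L_def C_def by blast
qed

theorem theorem4p3:
  fixes \<Omega> :: "'a::euclidean_space set"
  assumes "affine_domain \<Omega>"
    and "properly_convex \<Omega>"
    and "quasi_homogeneous \<Omega>"
  shows "\<forall>x\<in>\<Omega>. \<exists>p. closure (\<Omega> \<inter> (\<lambda>v. x + v) ` span (asymptotic_cone \<Omega>))
                     = (\<lambda>u. p + u) ` asymptotic_cone \<Omega>"
proof
  fix x assume x: "x \<in> \<Omega>"
  have opn: "open \<Omega>" and ne: "\<Omega> \<noteq> {}" using assms(1) unfolding affine_domain_def by auto
  have cvx: "convex \<Omega>" and noline: "\<not> (\<exists>x v. v \<noteq> 0 \<and> (\<forall>t::real. x + t *\<^sub>R v \<in> \<Omega>))"
    using assms(2) unfolding properly_convex_def by auto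
  obtain K G where K: "compact K" "K \<subseteq> \<Omega>" and G: "affine_group_preserving G \<Omega>"
    and GK: "(\<Union>g\<in>G. g ` K) = \<Omega>"
    using assms(3) unfolding quasi_homogeneous_def by blast
  show "\<exists>p. closure (\<Omega> \<inter> (\<lambda>v. x + v) ` span (asymptotic_cone \<Omega>))
                     = (\<lambda>u. p + u) ` asymptotic_cone \<Omega>"
    by (rule main_fiber[OF opn cvx ne noline K G GK x])
qed

end
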